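(* Let $A$ be a three-dimensional permutation array of size $n_1\times n_2\times n_1n_2$ (defined by a bijection $\varphi:[n_1]\times[n_2]\to[n_1n_2]$, with $n_1,n_2\ge2$). If any of the following holds: (i) $n_1$ and $n_2$ are both odd; (ii) $n_1$ and $n_2$ are both even and $\max(n_1,n_2)>4$; (iii) one of $n_1,n_2$ is even and greater than $2$ and the other is odd; then there is an $n_1\times n_2\times n_1n_2$ window in the periodic extension of $A$ having a repeated difference vector.
   Context: For $n\in\mathbb{N}$, $[n]=\{1,\dots,n\}$. The array $A:[n_1]\times[n_2]\times[n_1n_2]\to\{0,1\}$ is defined by $A(a_1,a_2,a_3)=1$ iff $\varphi(a_1,a_2)=a_3$; points with value 1 are dots. The periodic extension $\mathbb{A}:\mathbb{Z}^3\to\{0,1\}$ is $\mathbb{A}(a_1,a_2,a_3)=A(a_1',a_2',a_3')$ where $a_i'$ is the representative of $a_i$ modulo the $i$-th side length lying in $\{1,\dots,\text{side length}\}$; an $n_1\times n_2\times n_1n_2$ window is the restriction of $\mathbb{A}$ to a box $\{k_1,\dots,k_1+n_1-1\}\times\{k_2,\dots,k_2+n_2-1\}\times\{k_3,\dots,k_3+n_1n_2-1\}$. The difference vector from dot $(a_i)$ to a distinct dot $(w_i)$ is $\langle w_1-a_1,w_2-a_2,w_3-a_3\rangle$; a window has a repeated difference vector if two distinct ordered pairs of distinct dots in it have equal difference vectors. *)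

theory Defs
  imports Main
begin

type_synonym point3 = "int \<times> int \<times> int"

text \<open>The permutation array A : [n1] x [n2] x [n1 n2] -> {0,1} defined by phi;
  True means a dot (value 1).\<close>
definition perm_array :: "(nat \<Rightarrow> nat \<Rightarrow> nat) \<Rightarrow> nat \<Rightarrow> nat \<Rightarrow> nat \<Rightarrow> nat \<Rightarrow> nat \<Rightarrow> bool" where
  "perm_array \<phi> n1 n2 a1 a2 a3 \<longleftrightarrow>
     a1 \<in> {1..n1} \<and> a2 \<in> {1..n2} \<and> a3 \<in> {1..n1*n2} \<and> \<phi> a1 a2 = a3"

definition rep :: "int \<Rightarrow> nat \<Rightarrow> int" where
  "rep a n = (a - 1) mod int n + 1"

definition periodic_ext :: "(nat \<Rightarrow> nat \<Rightarrow> nat) \<Rightarrow> nat \<Rightarrow> nat \<Rightarrow> point3 \<Rightarrow> bool" where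
  "periodic_ext \<phi> n1 n2 p = (case p of (a1, a2, a3) \<Rightarrow>
     perm_array \<phi> n1 n2 (nat (rep a1 n1)) (nat (rep a2 n2)) (nat (rep a3 (n1*n2))))"

definition window_dots :: "(nat \<Rightarrow> nat \<Rightarrow> nat) \<Rightarrow> nat \<Rightarrow> nat \<Rightarrow> int \<Rightarrow> int \<Rightarrow> int \<Rightarrow> point3 set" where
  "window_dots \<phi> n1 n2 k1 k2 k3 =
     {(a1, a2, a3). a1 \<in> {k1..k1 + int n1 - 1} \<and> a2 \<in> {k2..k2 + int n2 - 1}
        \<and> a3 \<in> {k3..k3 + int (n1*n2) - 1} \<and> periodic_ext \<phi> n1 n2 (a1, a2, a3)}"

definition diff_vec :: "point3 \<Rightarrow> point3 \<Rightarrow> point3" where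
  "diff_vec a w = (case a of (a1, a2, a3) \<Rightarrow> case w of (w1, w2, w3) \<Rightarrow>
     (w1 - a1, w2 - a2, w3 - a3))"

definition has_repeated_diff :: "point3 set \<Rightarrow> bool" where
  "has_repeated_diff D \<longleftrightarrow>
     (\<exists>a w b v. a \<in> D \<and> w \<in> D \<and> b \<in> D \<and> v \<in> D \<and> a \<noteq> w \<and> b \<noteq> v
        \<and> (a, w) \<noteq> (b, v) \<and> diff_vec a w = diff_vec b v)"

end

theory Submission
  imports Defs
begin


lemma mod_inj1:
  fixes A B C N :: int
  assumes "1 \<le> A" "A \<le> N" "1 \<le> B" "B \<le> N" "(A - C) mod N = (B - C) mod N"
  shows "A = B"
proof -
  have "N dvd (A - C) - (B - C)" using assms(5) by (simp add: mod_eq_dvd_iff)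
  then obtain q where q: "A - B = N * q" by (auto simp: dvd_def)
  show ?thesis
  proof (cases "q = 0")
    case True then show ?thesis using q by simp
  next
    case False
    then have "q \<ge> 1 \<or> q \<le> -1" by linarith
    then show ?thesis
    proof
      assume "q \<ge> 1" then have "N * q \<ge> N" using assms by (simp add: mult_le_cancel_left1)
      then show ?thesis using q assms by linarith
    next
      assume "q \<le> -1" then have "N * q \<le> -N" using assms
        by (smt (verit, ccfv_SIG) mult_le_cancel_left1 mult_minus_right)
      then show ?thesis using q assms by linarith
    qed
  qed
qed

lemma mod_sub: fixes x N :: int assumes "N \<le> x" "x < 2*N" shows "x mod N = x - N"
proof -
  have "x mod N = (x - N) mod N" by (metis mod_add_self2 diff_add_cancel)
  also have "\<dots> = x - N" using assms by (intro mod_pos_pos_trivial) auto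
  finally show ?thesis .
qed

lemma L2a:
  fixes c d N :: int
  assumes "0 < c" "c < N" "0 \<le> d" "d < N" "\<not> (d = c \<and> 2*c = N)"
  shows "\<exists>t. 0 \<le> t \<and> t < N \<and> (t+c) mod N - t = ((t+d) mod N + c) mod N - (t+d) mod N"
proof -
  consider "d < c" | "c \<le> d" "d < N - c" | "c < d" "N - c \<le> d" | "d = c" "2*c > N"
    using assms by linarith
  then show ?thesis
  proof cases
    case 1
    have e1: "(N - c + d) mod N = N - c + d" using 1 assms by (intro mod_pos_pos_trivial) auto
    have e0: "d mod N = d" using assms(3,4) by (simp add: mod_pos_pos_trivial)
    have e2: "(N - c + d + c) mod N = d" using e0 by (simp add: algebra_simps)
    show ?thesis by (rule exI[of _ "N - c"]) (use assms in \<open>simp add: e1 e0\<close>)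
  next
    case 2
    have e1: "d mod N = d" using assms by (intro mod_pos_pos_trivial) auto
    have e2: "(d + c) mod N = d + c" using 2 assms by (intro mod_pos_pos_trivial) auto
    have e3: "c mod N = c" using assms by (intro mod_pos_pos_trivial) auto
    show ?thesis by (rule exI[of _ 0]) (use assms in \<open>simp add: e1 e2 e3\<close>)
  next
    case 3
    have e1: "(N - d + c) mod N = N - d + c" using 3 assms by (intro mod_pos_pos_trivial) auto
    have e3: "c mod N = c" using assms by (intro mod_pos_pos_trivial) auto
    show ?thesis by (rule exI[of _ "N - d"]) (use assms 3 in \<open>simp add: e1 e3\<close>)
  next
    case 4
    have e1: "(N - 1 + c) mod N = c - 1" using 4 assms mod_sub[of N "N-1+c"] by simp
    have e2: "(2*c - 1) mod N = 2*c - 1 - N" using 4 assms mod_sub[of N "2*c-1"] by simp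
    show ?thesis by (rule exI[of _ "N - 1"]) (use assms 4 in \<open>simp add: e1 e2\<close>)
  qed
qed

lemma L2:
  fixes A B A' B' N :: int
  assumes "0 < N" "(B - A) mod N = (B' - A') mod N" "(B - A) mod N \<noteq> 0"
    "\<not> ((A' - A) mod N = (B - A) mod N \<and> 2 * ((B - A) mod N) = N)"
  shows "\<exists>k. (B-k) mod N - (A-k) mod N = (B'-k) mod N - (A'-k) mod N"
proof -
  define c where "c = (B - A) mod N"
  define d where "d = (A' - A) mod N"
  have "0 \<le> c" "c < N" using assms c_def by auto
  moreover have "c \<noteq> 0" using assms c_def by auto
  ultimately have "0 < c" "c < N" by auto
  moreover have "0 \<le> d" "d < N" using assms d_def by auto
  ultimately obtain t where tb: "0 \<le> t" "t < N" and t: "(t+c) mod N - t = ((t+d) mod N + c) mod N - (t+d) mod N"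
    using L2a[of c N d] assms c_def d_def by auto
  have "(t+c) mod N - t = ((t+d) mod N + c) mod N - (t+d) mod N" by (fact t)
  define k where "k = A - ((t + N) mod N)"
  show ?thesis
  proof (rule exI[of _ "A - t"])
    have h1: "(A - (A - t)) mod N = t mod N" by simp
    have h2: "(B - (A - t)) mod N = (t + c) mod N" unfolding c_def
      by (simp add: mod_simps algebra_simps)
    have h3: "(A' - (A - t)) mod N = (t + d) mod N" unfolding d_def
      by (simp add: mod_simps algebra_simps)
    have "(B' - (A - t)) mod N = ((B' - A') + (A' - (A - t))) mod N" by (simp add: algebra_simps)
    also have "\<dots> = ((B' - A') mod N + (A' - (A - t)) mod N) mod N" by (simp add: mod_add_eq)
    also have "\<dots> = ((t + d) mod N + c) mod N" using h3 c_def assms(2) by (simp add: add.commute)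
    finally have h4: "(B' - (A - t)) mod N = ((t + d) mod N + c) mod N" .
    show "(B-(A-t)) mod N - (A-(A-t)) mod N = (B'-(A-t)) mod N - (A'-(A-t)) mod N"
      using t h1 h2 h3 h4 tb by simp
  qed
qed

lemma rep_id: "1 \<le> i \<Longrightarrow> i \<le> int n \<Longrightarrow> rep i n = i"
  unfolding rep_def by (simp add: mod_pos_pos_trivial)

lemma rep_add: "rep (i + int n) n = rep i n"
proof -
  have "i + int n - 1 = (i - 1) + int n" by simp
  then show ?thesis unfolding rep_def by (simp only: mod_add_self2)
qed

lemma col_lift:
  fixes n i c :: nat
  assumes "1 \<le> i" "i \<le> n" "1 \<le> c" "c \<le> n" "i \<noteq> c"
  shows "\<exists>p::int. int c + 1 \<le> p \<and> p + 1 \<le> int c + int n \<and> rep p n = int i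
          \<and> rep (p+1) n = int (if i = n then 1 else i+1)"
proof (cases "i > c")
  case True
  show ?thesis
  proof (rule exI[of _ "int i"], intro conjI)
    show "rep (int i) n = int i" using assms by (simp add: rep_id)
    show "rep (int i + 1) n = int (if i = n then 1 else i + 1)"
    proof (cases "i = n")
      case True
      have "rep (1 + int n) n = rep 1 n" by (rule rep_add)
      then show ?thesis using True assms by (simp add: rep_id add.commute)
    next
      case False then show ?thesis using assms by (simp add: rep_id)
    qed
  qed (use True assms in auto)
next
  case False
  then have ic: "i < c" using assms by simp
  show ?thesis
  proof (rule exI[of _ "int i + int n"], intro conjI)
    show "rep (int i + int n) n = int i" using assms by (simp add: rep_add rep_id)
    have "rep (int i + int n + 1) n = rep (int i + 1 + int n) n" by (simp add: algebra_simps)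
    also have "\<dots> = int i + 1" using assms ic by (simp add: rep_add rep_id)
    finally show "rep (int i + int n + 1) n = int (if i = n then 1 else i + 1)" using ic assms by simp
  qed (use ic assms in auto)
qed

lemma dot_in_window:
  assumes "1 \<le> i" "i \<le> n1" "1 \<le> j" "j \<le> n2"
    "k1 \<le> p1" "p1 \<le> k1 + int n1 - 1" "rep p1 n1 = int i"
    "k2 \<le> p2" "p2 \<le> k2 + int n2 - 1" "rep p2 n2 = int j"
    "\<phi> i j \<in> {1..n1*n2}"
  shows "(p1, p2, k3 + (int (\<phi> i j) - k3) mod int (n1*n2)) \<in> window_dots \<phi> n1 n2 k1 k2 k3"
proof -
  let ?N = "int (n1*n2)"
  have Np: "?N > 0" using assms by auto
  have r3: "rep (k3 + (int (\<phi> i j) - k3) mod ?N) (n1*n2) = int (\<phi> i j)"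
  proof -
    have "(k3 + (int (\<phi> i j) - k3) mod ?N - 1) mod ?N = (int (\<phi> i j) - 1) mod ?N"
      by (metis (no_types, opaque_lifting) add_diff_cancel_left' diff_add_cancel mod_add_right_eq add_diff_eq)
    also have "\<dots> = int (\<phi> i j) - 1"
    proof (intro mod_pos_pos_trivial)
      have "int (\<phi> i j) \<le> ?N" using assms(11) by (simp only: atLeastAtMost_iff of_nat_le_iff)
      then show "int (\<phi> i j) - 1 < ?N" by linarith
    qed (use assms(11) in auto)
    finally show ?thesis unfolding rep_def by simp
  qed
  have b3: "k3 \<le> k3 + (int (\<phi> i j) - k3) mod ?N" "k3 + (int (\<phi> i j) - k3) mod ?N \<le> k3 + ?N - 1"
    using Np pos_mod_bound[OF Np, of "int (\<phi> i j) - k3"] by auto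
  show ?thesis unfolding window_dots_def periodic_ext_def perm_array_def
    using assms r3 b3 by auto
qed

lemma count_collision:
  fixes D :: "'a \<Rightarrow> int"
  assumes "finite P" "card P = N" "N > 0" "\<And>x. x \<in> P \<Longrightarrow> D x \<in> {1..int N - 1}"
  shows "\<exists>x\<in>P. \<exists>y\<in>P. x \<noteq> y \<and> D x = D y"
proof (rule ccontr)
  assume "\<not> ?thesis"
  then have "inj_on D P" unfolding inj_on_def by blast
  then have "card (D ` P) = N" using assms by (simp add: card_image)
  moreover have "card (D ` P) \<le> card {1..int N - 1}"
    using assms by (intro card_mono) auto
  ultimately show False using assms by simp
qed


lemma case1:
  fixes n1 n2 :: nat and \<phi> :: "nat \<Rightarrow> nat \<Rightarrow> nat"
  assumes n1: "n1 \<ge> 3" and n2: "n2 \<ge> 1"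
    and bij: "bij_betw (\<lambda>(a1, a2). \<phi> a1 a2) ({1..n1} \<times> {1..n2}) {1..n1*n2}"
  shows "\<exists>k1 k2 k3. has_repeated_diff (window_dots \<phi> n1 n2 k1 k2 k3)"
proof -
  define N where "N = n1*n2"
  define s where "s i = (if i = n1 then 1 else i+1)" for i :: nat
  let ?P = "{1..n1} \<times> {1..n2}"
  have Npos: "N > 0" using n1 n2 N_def by simp
  have inj: "inj_on (\<lambda>(a1, a2). \<phi> a1 a2) ?P" using bij by (simp add: bij_betw_def)
  have rng: "\<phi> i j \<in> {1..N}" if "i \<in> {1..n1}" "j \<in> {1..n2}" for i j
    using bij_betw_apply[OF bij, of "(i, j)"] that N_def by auto
  have injD: "i = i' \<and> j = j'" if "i \<in> {1..n1}" "j \<in> {1..n2}" "i' \<in> {1..n1}" "j' \<in> {1..n2}"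
    "\<phi> i j = \<phi> i' j'" for i j i' j'
  proof -
    have "(i, j) = (i', j')" using inj_onD[OF inj, of "(i,j)" "(i',j')"] that by auto
    then show ?thesis by simp
  qed
  have s_rng: "s i \<in> {1..n1}" if "i \<in> {1..n1}" for i using that n1 s_def by auto
  have s_ne: "s i \<noteq> i" if "i \<in> {1..n1}" for i using that n1 s_def by auto
  have ss: "s (s i) \<noteq> i" if "i \<in> {1..n1}" for i using that n1 s_def by auto
  define D where "D x = (int (\<phi> (s (fst x)) (snd x)) - int (\<phi> (fst x) (snd x))) mod int N" for x
  have D_rng: "D x \<in> {1..int N - 1}" if xP: "x \<in> ?P" for x
  proof -
    obtain i j where x: "x = (i, j)" "i \<in> {1..n1}" "j \<in> {1..n2}" using xP by auto
    have "D x \<noteq> 0"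
    proof
      assume "D x = 0"
      then have "(int (\<phi> (s i) j) - int (\<phi> i j)) mod int N = (int (\<phi> i j) - int (\<phi> i j)) mod int N"
        using x D_def by simp
      then have "int (\<phi> (s i) j) = int (\<phi> i j)"
        using rng[OF s_rng[OF x(2)] x(3)] rng[OF x(2) x(3)]
        using mod_inj1[of "int (\<phi> (s i) j)" "int N" "int (\<phi> i j)" "int (\<phi> i j)"] by auto
      then have "s i = i" using injD[OF s_rng[OF x(2)] x(3) x(2) x(3)] by simp
      then show False using s_ne x by simp
    qed
    moreover have "0 \<le> D x" "D x < int N" using Npos D_def by auto
    ultimately show ?thesis by auto
  qed
  have cardP: "card ?P = N" using N_def by (simp add: card_cartesian_product)
  obtain x y where xy: "x \<in> ?P" "y \<in> ?P" "x \<noteq> y" "D x = D y"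
    using count_collision[of ?P N D] cardP Npos D_rng by auto
  obtain i j where x: "x = (i, j)" "i \<in> {1..n1}" "j \<in> {1..n2}" using xy by auto
  obtain i' j' where y: "y = (i', j')" "i' \<in> {1..n1}" "j' \<in> {1..n2}" using xy by auto
  obtain c where c: "c \<in> {1..n1}" "c \<noteq> i" "c \<noteq> i'"
  proof -
    have "\<exists>c \<in> {1::nat,2,3}. c \<noteq> i \<and> c \<noteq> i'" by auto
    then obtain c0 where "c0 \<in> {1::nat,2,3}" "c0 \<noteq> i" "c0 \<noteq> i'" by blast
    then show ?thesis using that[of c0] n1 by auto
  qed
  obtain p where p: "int c + 1 \<le> p" "p + 1 \<le> int c + int n1" "rep p n1 = int i"
      "rep (p+1) n1 = int (s i)"
    using col_lift[of i n1 c] x c unfolding s_def by auto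
  obtain p' where p': "int c + 1 \<le> p'" "p' + 1 \<le> int c + int n1" "rep p' n1 = int i'"
      "rep (p'+1) n1 = int (s i')"
    using col_lift[of i' n1 c] y c unfolding s_def by auto
  define A where "A = int (\<phi> i j)"
  define B where "B = int (\<phi> (s i) j)"
  define A' where "A' = int (\<phi> i' j')"
  define B' where "B' = int (\<phi> (s i') j')"
  have AB: "1 \<le> A" "A \<le> int N" "1 \<le> B" "B \<le> int N" "1 \<le> A'" "A' \<le> int N" "1 \<le> B'" "B' \<le> int N"
    using rng[OF x(2,3)] rng[OF s_rng[OF x(2)] x(3)] rng[OF y(2,3)] rng[OF s_rng[OF y(2)] y(3)]
    unfolding A_def B_def A'_def B'_def by auto
  have Deq: "(B - A) mod int N = (B' - A') mod int N"
    using xy(4) x y D_def A_def B_def A'_def B'_def by simp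
  have Dnz: "(B - A) mod int N \<noteq> 0" using D_rng[OF xy(1)] x D_def A_def B_def by auto
  have nondeg: "\<not> ((A' - A) mod int N = (B - A) mod int N \<and> 2 * ((B - A) mod int N) = int N)"
  proof
    assume h: "(A' - A) mod int N = (B - A) mod int N \<and> 2 * ((B - A) mod int N) = int N"
    have e1: "A' = B" using h AB mod_inj1[of A' "int N" B A] by auto
    have "(B' - A) mod int N = ((B' - A') + (A' - A)) mod int N" by simp
    also have "\<dots> = ((B' - A') mod int N + (A' - A) mod int N) mod int N" by (simp add: mod_add_eq)
    also have "\<dots> = (2 * ((B - A) mod int N)) mod int N" using h Deq by simp
    also have "\<dots> = (A - A) mod int N" using h by simp
    finally have e2: "B' = A" using AB mod_inj1[of B' "int N" A A] by auto
    have "i' = s i \<and> j' = j" using e1 injD[OF y(2,3) s_rng[OF x(2)] x(3)] A'_def B_def by simp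
    moreover have "s i' = i \<and> j' = j" using e2 injD[OF s_rng[OF y(2)] y(3) x(2,3)] B'_def A_def by simp
    ultimately show False using ss[OF x(2)] by simp
  qed
  obtain k where k: "(B-k) mod int N - (A-k) mod int N = (B'-k) mod int N - (A'-k) mod int N"
    using L2[of "int N" B A B' A'] Npos Deq Dnz nondeg by auto
  define a where "a = (p, int j, k + (A - k) mod int N)"
  define w where "w = (p + 1, int j, k + (B - k) mod int N)"
  define b where "b = (p', int j', k + (A' - k) mod int N)"
  define v where "v = (p' + 1, int j', k + (B' - k) mod int N)"
  let ?W = "window_dots \<phi> n1 n2 (int c + 1) 1 k"
  have repj: "rep (int j) n2 = int j" using x by (simp add: rep_id)
  have repj': "rep (int j') n2 = int j'" using y by (simp add: rep_id)
  have aW: "a \<in> ?W" unfolding a_def A_def N_def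
    using x p repj rng[OF x(2,3)] N_def by (intro dot_in_window) auto
  have wW: "w \<in> ?W" unfolding w_def B_def N_def
    using x p repj rng[OF s_rng[OF x(2)] x(3)] s_rng[OF x(2)] N_def by (intro dot_in_window) auto
  have bW: "b \<in> ?W" unfolding b_def A'_def N_def
    using y p' repj' rng[OF y(2,3)] N_def by (intro dot_in_window) auto
  have vW: "v \<in> ?W" unfolding v_def B'_def N_def
    using y p' repj' rng[OF s_rng[OF y(2)] y(3)] s_rng[OF y(2)] N_def by (intro dot_in_window) auto
  have ne: "a \<noteq> w" "b \<noteq> v" unfolding a_def w_def b_def v_def by auto
  have ne2: "(a, w) \<noteq> (b, v)"
  proof
    assume "(a, w) = (b, v)"
    then have "p = p'" "j = j'" unfolding a_def b_def by auto
    then have "i = i'" using p(3) p'(3) by simp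
    then show False using xy(3) x y \<open>j = j'\<close> by simp
  qed
  have dv: "diff_vec a w = diff_vec b v"
    unfolding a_def w_def b_def v_def diff_vec_def using k by simp
  have "has_repeated_diff ?W" unfolding has_repeated_diff_def
    by (rule exI[of _ a], rule exI[of _ w], rule exI[of _ b], rule exI[of _ v])
       (intro conjI aW wW bW vW ne ne2 dv)
  then show ?thesis by blast
qed

lemma case2:
  fixes n1 n2 :: nat and \<phi> :: "nat \<Rightarrow> nat \<Rightarrow> nat"
  assumes n2: "n2 \<ge> 3" and n1: "n1 \<ge> 1"
    and bij: "bij_betw (\<lambda>(a1, a2). \<phi> a1 a2) ({1..n1} \<times> {1..n2}) {1..n1*n2}"
  shows "\<exists>k1 k2 k3. has_repeated_diff (window_dots \<phi> n1 n2 k1 k2 k3)"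
proof -
  define N where "N = n1*n2"
  define s where "s j = (if j = n2 then 1 else j+1)" for j :: nat
  let ?P = "{1..n1} \<times> {1..n2}"
  have Npos: "N > 0" using n1 n2 N_def by simp
  have inj: "inj_on (\<lambda>(a1, a2). \<phi> a1 a2) ?P" using bij by (simp add: bij_betw_def)
  have rng: "\<phi> i j \<in> {1..N}" if "i \<in> {1..n1}" "j \<in> {1..n2}" for i j
    using bij_betw_apply[OF bij, of "(i, j)"] that N_def by auto
  have injD: "i = i' \<and> j = j'" if "i \<in> {1..n1}" "j \<in> {1..n2}" "i' \<in> {1..n1}" "j' \<in> {1..n2}"
    "\<phi> i j = \<phi> i' j'" for i j i' j'
  proof -
    have "(i, j) = (i', j')" using inj_onD[OF inj, of "(i,j)" "(i',j')"] that by auto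
    then show ?thesis by simp
  qed
  have s_rng: "s j \<in> {1..n2}" if "j \<in> {1..n2}" for j using that n2 s_def by auto
  have s_ne: "s j \<noteq> j" if "j \<in> {1..n2}" for j using that n2 s_def by auto
  have ss: "s (s j) \<noteq> j" if "j \<in> {1..n2}" for j using that n2 s_def by auto
  define D where "D x = (int (\<phi> (fst x) (s (snd x))) - int (\<phi> (fst x) (snd x))) mod int N" for x
  have D_rng: "D x \<in> {1..int N - 1}" if xP: "x \<in> ?P" for x
  proof -
    obtain i j where x: "x = (i, j)" "i \<in> {1..n1}" "j \<in> {1..n2}" using xP by auto
    have "D x \<noteq> 0"
    proof
      assume "D x = 0"
      then have "(int (\<phi> i (s j)) - int (\<phi> i j)) mod int N = (int (\<phi> i j) - int (\<phi> i j)) mod int N"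
        using x D_def by simp
      then have "int (\<phi> i (s j)) = int (\<phi> i j)"
        using rng[OF x(2) s_rng[OF x(3)]] rng[OF x(2) x(3)]
        using mod_inj1[of "int (\<phi> i (s j))" "int N" "int (\<phi> i j)" "int (\<phi> i j)"] by auto
      then have "s j = j" using injD[OF x(2) s_rng[OF x(3)] x(2) x(3)] by simp
      then show False using s_ne x by simp
    qed
    moreover have "0 \<le> D x" "D x < int N" using Npos D_def by auto
    ultimately show ?thesis by auto
  qed
  have cardP: "card ?P = N" using N_def by (simp add: card_cartesian_product)
  obtain x y where xy: "x \<in> ?P" "y \<in> ?P" "x \<noteq> y" "D x = D y"
    using count_collision[of ?P N D] cardP Npos D_rng by auto
  obtain i j where x: "x = (i, j)" "i \<in> {1..n1}" "j \<in> {1..n2}" using xy by auto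
  obtain i' j' where y: "y = (i', j')" "i' \<in> {1..n1}" "j' \<in> {1..n2}" using xy by auto
  obtain c where c: "c \<in> {1..n2}" "c \<noteq> j" "c \<noteq> j'"
  proof -
    have "\<exists>c \<in> {1::nat,2,3}. c \<noteq> j \<and> c \<noteq> j'" by auto
    then obtain c0 where "c0 \<in> {1::nat,2,3}" "c0 \<noteq> j" "c0 \<noteq> j'" by blast
    then show ?thesis using that[of c0] n2 by auto
  qed
  obtain p where p: "int c + 1 \<le> p" "p + 1 \<le> int c + int n2" "rep p n2 = int j"
      "rep (p+1) n2 = int (s j)"
    using col_lift[of j n2 c] x c unfolding s_def by auto
  obtain p' where p': "int c + 1 \<le> p'" "p' + 1 \<le> int c + int n2" "rep p' n2 = int j'"
      "rep (p'+1) n2 = int (s j')"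
    using col_lift[of j' n2 c] y c unfolding s_def by auto
  define A where "A = int (\<phi> i j)"
  define B where "B = int (\<phi> i (s j))"
  define A' where "A' = int (\<phi> i' j')"
  define B' where "B' = int (\<phi> i' (s j'))"
  have AB: "1 \<le> A" "A \<le> int N" "1 \<le> B" "B \<le> int N" "1 \<le> A'" "A' \<le> int N" "1 \<le> B'" "B' \<le> int N"
    using rng[OF x(2,3)] rng[OF x(2) s_rng[OF x(3)]] rng[OF y(2,3)] rng[OF y(2) s_rng[OF y(3)]]
    unfolding A_def B_def A'_def B'_def by auto
  have Deq: "(B - A) mod int N = (B' - A') mod int N"
    using xy(4) x y D_def A_def B_def A'_def B'_def by simp
  have Dnz: "(B - A) mod int N \<noteq> 0" using D_rng[OF xy(1)] x D_def A_def B_def by auto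
  have nondeg: "\<not> ((A' - A) mod int N = (B - A) mod int N \<and> 2 * ((B - A) mod int N) = int N)"
  proof
    assume h: "(A' - A) mod int N = (B - A) mod int N \<and> 2 * ((B - A) mod int N) = int N"
    have e1: "A' = B" using h AB mod_inj1[of A' "int N" B A] by auto
    have "(B' - A) mod int N = ((B' - A') + (A' - A)) mod int N" by simp
    also have "\<dots> = ((B' - A') mod int N + (A' - A) mod int N) mod int N" by (simp add: mod_add_eq)
    also have "\<dots> = (2 * ((B - A) mod int N)) mod int N" using h Deq by simp
    also have "\<dots> = (A - A) mod int N" using h by simp
    finally have e2: "B' = A" using AB mod_inj1[of B' "int N" A A] by auto
    have "i' = i \<and> j' = s j" using e1 injD[OF y(2,3) x(2) s_rng[OF x(3)]] A'_def B_def by simp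
    moreover have "i' = i \<and> s j' = j" using e2 injD[OF y(2) s_rng[OF y(3)] x(2,3)] B'_def A_def by simp
    ultimately show False using ss[OF x(3)] by simp
  qed
  obtain k where k: "(B-k) mod int N - (A-k) mod int N = (B'-k) mod int N - (A'-k) mod int N"
    using L2[of "int N" B A B' A'] Npos Deq Dnz nondeg by auto
  define a where "a = (int i, p, k + (A - k) mod int N)"
  define w where "w = (int i, p + 1, k + (B - k) mod int N)"
  define b where "b = (int i', p', k + (A' - k) mod int N)"
  define v where "v = (int i', p' + 1, k + (B' - k) mod int N)"
  let ?W = "window_dots \<phi> n1 n2 1 (int c + 1) k"
  have repi: "rep (int i) n1 = int i" using x by (simp add: rep_id)
  have repi': "rep (int i') n1 = int i'" using y by (simp add: rep_id)
  have aW: "a \<in> ?W" unfolding a_def A_def N_def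
    using x p repi rng[OF x(2,3)] N_def by (intro dot_in_window) auto
  have wW: "w \<in> ?W" unfolding w_def B_def N_def
    using x p repi rng[OF x(2) s_rng[OF x(3)]] s_rng[OF x(3)] N_def by (intro dot_in_window) auto
  have bW: "b \<in> ?W" unfolding b_def A'_def N_def
    using y p' repi' rng[OF y(2,3)] N_def by (intro dot_in_window) auto
  have vW: "v \<in> ?W" unfolding v_def B'_def N_def
    using y p' repi' rng[OF y(2) s_rng[OF y(3)]] s_rng[OF y(3)] N_def by (intro dot_in_window) auto
  have ne: "a \<noteq> w" "b \<noteq> v" unfolding a_def w_def b_def v_def by auto
  have ne2: "(a, w) \<noteq> (b, v)"
  proof
    assume "(a, w) = (b, v)"
    then have "p = p'" "i = i'" unfolding a_def b_def by auto
    then have "j = j'" using p(3) p'(3) by simp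
    then show False using xy(3) x y \<open>i = i'\<close> by simp
  qed
  have dv: "diff_vec a w = diff_vec b v"
    unfolding a_def w_def b_def v_def diff_vec_def using k by simp
  have "has_repeated_diff ?W" unfolding has_repeated_diff_def
    by (rule exI[of _ a], rule exI[of _ w], rule exI[of _ b], rule exI[of _ v])
       (intro conjI aW wW bW vW ne ne2 dv)
  then show ?thesis by blast
qed

theorem mainTheorem11:
  fixes n1 n2 :: nat and \<phi> :: "nat \<Rightarrow> nat \<Rightarrow> nat"
  assumes "n1 \<ge> 2" and "n2 \<ge> 2"
    and "bij_betw (\<lambda>(a1, a2). \<phi> a1 a2) ({1..n1} \<times> {1..n2}) {1..n1*n2}"
    and "(odd n1 \<and> odd n2)
         \<or> (even n1 \<and> even n2 \<and> max n1 n2 > 4)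
         \<or> (even n1 \<and> n1 > 2 \<and> odd n2)
         \<or> (even n2 \<and> n2 > 2 \<and> odd n1)"
  shows "\<exists>k1 k2 k3. has_repeated_diff (window_dots \<phi> n1 n2 k1 k2 k3)"
proof -
  have "n1 \<ge> 3 \<or> n2 \<ge> 3"
  proof (rule ccontr)
    assume "\<not> ?thesis"
    then have "n1 = 2" "n2 = 2" using assms(1,2) by auto
    then show False using assms(4) by simp
  qed
  then show ?thesis
  proof
    assume "n1 \<ge> 3" then show ?thesis using case1[OF _ _ assms(3)] assms(2) by simp
  next
    assume "n2 \<ge> 3" then show ?thesis using case2[OF _ _ assms(3)] assms(1) by simp
  qed
qed

end
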